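(* Let $G$ be a finite group and let $H\leq G$. Consider the square matrix \[ \bigl( |P\backslash G /Q| \bigr)_{P,Q}, \] whose rows and columns are indexed by the $G$-conjugacy classes of subgroups of $H$ (with $P,Q$ representatives of these classes), and whose $(P,Q)$-entry is the number of $(P,Q)$-double cosets $PgQ$, $g\in G$. Then the rank of this matrix (over $\mathbb{Q}$) is equal to the number of $G$-conjugacy classes of cyclic subgroups of $H$.
   Context: Two subgroups $P,Q\leq H$ are $G$-conjugate if $Q=gPg^{-1}$ for some $g\in G$. The number $|P\backslash G/Q|$ depends only on the $G$-conjugacy classes of $P$ and $Q$. *)

theory Defs
  imports "HOL-Algebra.Algebra" "Jordan_Normal_Form.DL_Rank"
begin

definition subgroups_of :: "('a, 'b) monoid_scheme \<Rightarrow> 'a set \<Rightarrow> 'a set set" where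
  "subgroups_of G H = {P. subgroup P G \<and> P \<subseteq> H}"

definition G_conjugate :: "('a, 'b) monoid_scheme \<Rightarrow> 'a set \<Rightarrow> 'a set \<Rightarrow> bool" where
  "G_conjugate G P Q \<longleftrightarrow> (\<exists>g\<in>carrier G. Q = (g <#\<^bsub>G\<^esub> P) #>\<^bsub>G\<^esub> inv\<^bsub>G\<^esub> g)"

definition conj_classes_of_subgroups :: "('a, 'b) monoid_scheme \<Rightarrow> 'a set \<Rightarrow> 'a set set set" where
  "conj_classes_of_subgroups G H =
     (\<lambda>P. {Q \<in> subgroups_of G H. G_conjugate G P Q}) ` subgroups_of G H"

definition class_rep :: "'a set set \<Rightarrow> 'a set" where
  "class_rep C = (SOME P. P \<in> C)"

definition double_cosets :: "('a, 'b) monoid_scheme \<Rightarrow> 'a set \<Rightarrow> 'a set \<Rightarrow> 'a set set" where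
  "double_cosets G P Q = {P <#>\<^bsub>G\<^esub> (g <#\<^bsub>G\<^esub> Q) | g. g \<in> carrier G}"

definition cyclic_subgroup :: "('a, 'b) monoid_scheme \<Rightarrow> 'a set \<Rightarrow> bool" where
  "cyclic_subgroup G P \<longleftrightarrow> (\<exists>g\<in>carrier G. P = generate G {g})"

definition conj_classes_of_cyclic_subgroups :: "('a, 'b) monoid_scheme \<Rightarrow> 'a set \<Rightarrow> 'a set set set" where
  "conj_classes_of_cyclic_subgroups G H =
     {C \<in> conj_classes_of_subgroups G H. \<exists>P\<in>C. cyclic_subgroup G P}"

text \<open>The double coset matrix, w.r.t. an enumeration e of the classes by 0..n-1.\<close>
definition double_coset_matrix ::
  "('a, 'b) monoid_scheme \<Rightarrow> (nat \<Rightarrow> 'a set set) \<Rightarrow> nat \<Rightarrow> rat mat" where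
  "double_coset_matrix G e n =
     mat n n (\<lambda>(i, j). of_nat (card (double_cosets G (class_rep (e i)) (class_rep (e j)))))"

end

theory Submission
  imports Defs
begin


definition cj :: "('a, 'b) monoid_scheme \<Rightarrow> 'a \<Rightarrow> 'a set \<Rightarrow> 'a set" where
  "cj G a P = (\<lambda>s. a \<otimes>\<^bsub>G\<^esub> s \<otimes>\<^bsub>G\<^esub> inv\<^bsub>G\<^esub> a) ` P"

context group
begin

lemma cj_coset: "P \<subseteq> carrier G \<Longrightarrow> a \<in> carrier G \<Longrightarrow> (a <# P) #> inv a = cj G a P"
  by (auto simp: l_coset_def r_coset_def cj_def)

lemma G_conjugate_iff: "P \<subseteq> carrier G \<Longrightarrow> G_conjugate G P Q \<longleftrightarrow> (\<exists>g\<in>carrier G. Q = cj G g P)"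
  unfolding G_conjugate_def using cj_coset by auto

lemma cj_hom: "a \<in> carrier G \<Longrightarrow> group_hom G G (\<lambda>x. a \<otimes> x \<otimes> inv a)"
  unfolding group_hom_def group_hom_axioms_def
  by (auto intro!: homI simp: is_group m_assoc) (simp add: m_assoc[symmetric])

lemma cj_subgroup: "subgroup P G \<Longrightarrow> a \<in> carrier G \<Longrightarrow> subgroup (cj G a P) G"
  unfolding cj_def using group_hom.subgroup_img_is_subgroup[OF cj_hom] by blast

lemma cj_subset: "P \<subseteq> carrier G \<Longrightarrow> a \<in> carrier G \<Longrightarrow> cj G a P \<subseteq> carrier G"
  unfolding cj_def by auto

lemma cj_card: "P \<subseteq> carrier G \<Longrightarrow> a \<in> carrier G \<Longrightarrow> card (cj G a P) = card P"
  unfolding cj_def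
  by (rule card_image) (auto intro!: inj_onI dest: conjugation_is_inj[OF _ subsetD subsetD])

lemma cj_cj: "P \<subseteq> carrier G \<Longrightarrow> a \<in> carrier G \<Longrightarrow> b \<in> carrier G \<Longrightarrow>
   cj G b (cj G a P) = cj G (b \<otimes> a) P"
  unfolding cj_def image_image
  by (intro image_cong refl) (auto simp: m_assoc inv_mult_group subsetD)

lemma cj_one: "P \<subseteq> carrier G \<Longrightarrow> cj G \<one> P = P"
  unfolding cj_def by (auto simp: subsetD image_iff)

lemma cj_inv: "P \<subseteq> carrier G \<Longrightarrow> a \<in> carrier G \<Longrightarrow> cj G (inv a) (cj G a P) = P"
  by (simp add: cj_cj cj_one)

lemma cj_inv2: "P \<subseteq> carrier G \<Longrightarrow> a \<in> carrier G \<Longrightarrow> cj G a (cj G (inv a) P) = P"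
  by (simp add: cj_cj cj_one)

lemma cj_mono: "P \<subseteq> Q \<Longrightarrow> cj G a P \<subseteq> cj G a Q"
  unfolding cj_def by auto

lemma cj_generate: "z \<in> carrier G \<Longrightarrow> a \<in> carrier G \<Longrightarrow>
    cj G a (generate G {z}) = generate G {a \<otimes> z \<otimes> inv a}"
  using group_hom.generate_img[OF cj_hom, of a "{z}"] unfolding cj_def by simp

lemma generate_single_le: "subgroup Q G \<Longrightarrow> x \<in> carrier G \<Longrightarrow> generate G {x} \<subseteq> Q \<longleftrightarrow> x \<in> Q"
  using generate_subgroup_incl[of "{x}" Q] generate.incl[of x "{x}" G] by blast

end




context group
begin

lemma conj_eq: "p \<in> carrier G \<Longrightarrow> q \<in> carrier G \<Longrightarrow> g \<in> carrier G \<Longrightarrow>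
   (p \<otimes> g \<otimes> inv q = g) = (inv g \<otimes> p \<otimes> g = q)"
proof -
  assume a: "p \<in> carrier G" "q \<in> carrier G" "g \<in> carrier G"
  have "(p \<otimes> g \<otimes> inv q = g) = (p \<otimes> g = g \<otimes> q)" using a by (simp add: inv_solve_right')
  also have "\<dots> = (inv g \<otimes> (p \<otimes> g) = q)" using a by (simp add: inv_solve_left')
  finally show ?thesis using a by (simp add: m_assoc)
qed

lemma dc_count:
  assumes fin: "finite (carrier G)" and P: "subgroup P G" and Q: "subgroup Q G"
  shows "card (double_cosets G P Q) * (card P * card Q)
       = (\<Sum>p\<in>P. card {g\<in>carrier G. inv g \<otimes> p \<otimes> g \<in> Q})"
proof -
  define K where "K = G\<lparr>carrier := P\<rparr> \<times>\<times> G\<lparr>carrier := Q\<rparr>"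
  define \<phi> where "\<phi> = (\<lambda>(p,q). \<lambda>g\<in>carrier G. p \<otimes> g \<otimes> inv q)"
  have PG: "P \<subseteq> carrier G" and QG: "Q \<subseteq> carrier G" using P Q subgroup.subset by auto
  have grpK: "group K" unfolding K_def
    by (rule DirProd_group[OF subgroup_imp_group[OF P] subgroup_imp_group[OF Q]])
  have cK: "carrier K = P \<times> Q" by (simp add: K_def)
  have bij: "\<phi> x \<in> Bij (carrier G)" if xK: "x \<in> carrier K" for x
  proof -
    obtain p q where x: "x = (p,q)" "p \<in> P" "q \<in> Q" using xK cK by auto
    have pq: "p \<in> carrier G" "q \<in> carrier G" using x PG QG by auto
    have "bij_betw (\<phi> x) (carrier G) (carrier G)"
      apply (rule bij_betw_byWitness[where f'="\<lambda>g. inv p \<otimes> g \<otimes> q"])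
      using pq by (auto simp: x \<phi>_def m_assoc) (simp_all add: m_assoc[symmetric])
    moreover have "\<phi> x \<in> extensional (carrier G)" by (simp add: x \<phi>_def)
    ultimately show ?thesis by (simp add: Bij_def)
  qed
  have hom: "\<phi> \<in> hom K (BijGroup (carrier G))"
  proof (rule homI)
    fix x assume "x \<in> carrier K" thus "\<phi> x \<in> carrier (BijGroup (carrier G))"
      using bij by (simp add: BijGroup_def)
  next
    fix x y assume xy: "x \<in> carrier K" "y \<in> carrier K"
    obtain p q where x: "x = (p,q)" "p \<in> P" "q \<in> Q" using xy cK by auto
    obtain p' q' where y: "y = (p',q')" "p' \<in> P" "q' \<in> Q" using xy cK by auto
    have pq: "p \<in> carrier G" "q \<in> carrier G" "p' \<in> carrier G" "q' \<in> carrier G"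
      using x y PG QG by auto
    have "\<phi> x \<otimes>\<^bsub>BijGroup (carrier G)\<^esub> \<phi> y = compose (carrier G) (\<phi> x) (\<phi> y)"
      using bij xy by (simp add: BijGroup_def)
    also have "\<dots> = \<phi> (x \<otimes>\<^bsub>K\<^esub> y)"
      unfolding compose_def
      by (rule ext) (use pq in \<open>auto simp: x y K_def \<phi>_def m_assoc inv_mult_group\<close>)
    finally show "\<phi> (x \<otimes>\<^bsub>K\<^esub> y) = \<phi> x \<otimes>\<^bsub>BijGroup (carrier G)\<^esub> \<phi> y" by simp
  qed
  interpret A: group_action K "carrier G" \<phi>
    unfolding group_action_def group_hom_def group_hom_axioms_def
    using grpK group_BijGroup hom by blast
  have finK: "finite (carrier K)" using cK finite_subset[OF PG fin] finite_subset[OF QG fin] by auto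
  have B: "card (orbits K (carrier G) \<phi>) * Coset.order K
        = (\<Sum>k\<in>carrier K. card (invariants (carrier G) \<phi> k))"
    by (rule A.burnside[OF finK fin])
  have orb: "orbit K \<phi> x = P <#> (x <# Q)" if x: "x \<in> carrier G" for x
  proof
    show "orbit K \<phi> x \<subseteq> P <#> (x <# Q)"
    proof
      fix y assume "y \<in> orbit K \<phi> x"
      then obtain p q where "p \<in> P" "q \<in> Q" "y = p \<otimes> x \<otimes> inv q"
        using x by (auto simp: orbit_def cK \<phi>_def)
      moreover have "inv q \<in> Q" using \<open>q \<in> Q\<close> Q subgroup.m_inv_closed by fastforce
      moreover have "x \<otimes> inv q \<in> x <# Q" using \<open>inv q \<in> Q\<close> by (auto simp: l_coset_def)
      moreover have "p \<in> carrier G" "q \<in> carrier G" using \<open>p \<in> P\<close> \<open>q \<in> Q\<close> PG QG by auto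
      hence "y = p \<otimes> (x \<otimes> inv q)" using \<open>y = _\<close> x
        by (simp add: m_assoc)
      ultimately show "y \<in> P <#> (x <# Q)"
        unfolding set_mult_def by blast
    qed
  next
    show "P <#> (x <# Q) \<subseteq> orbit K \<phi> x"
    proof
      fix y assume "y \<in> P <#> (x <# Q)"
      then obtain p q where pq: "p \<in> P" "q \<in> Q" "y = p \<otimes> (x \<otimes> q)"
        by (auto simp: set_mult_def l_coset_def)
      have "inv q \<in> Q" using \<open>q \<in> Q\<close> Q subgroup.m_inv_closed by fastforce
      moreover have "p \<in> carrier G" "q \<in> carrier G" using pq PG QG by auto
      hence "y = \<phi> (p, inv q) x"
        using pq x by (simp add: \<phi>_def m_assoc)
      ultimately show "y \<in> orbit K \<phi> x" using pq \<open>y = \<phi> (p, inv q) x\<close> unfolding orbit_def cK by blast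
    qed
  qed
  have orbs: "orbits K (carrier G) \<phi> = double_cosets G P Q"
    unfolding orbits_def double_cosets_def using orb by auto
  have ordK: "Coset.order K = card P * card Q" by (simp add: Coset.order_def cK card_cartesian_product)
  have inv: "card (invariants (carrier G) \<phi> (p,q)) = card {g\<in>carrier G. inv g \<otimes> p \<otimes> g = q}"
    if "p \<in> P" "q \<in> Q" for p q
  proof -
    have "invariants (carrier G) \<phi> (p,q) = {g\<in>carrier G. inv g \<otimes> p \<otimes> g = q}"
    proof -
      have "p \<in> carrier G" "q \<in> carrier G" using that PG QG by auto
      thus ?thesis using conj_eq by (auto simp: invariants_def \<phi>_def)
    qed
    thus ?thesis by simp
  qed
  have fib: "card {g\<in>carrier G. inv g \<otimes> p \<otimes> g \<in> Q}
      = (\<Sum>q\<in>Q. card {g\<in>carrier G. inv g \<otimes> p \<otimes> g = q})" if "p \<in> P" for p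
  proof -
    let ?S = "{g\<in>carrier G. inv g \<otimes> p \<otimes> g \<in> Q}"
    have "(\<Sum>q\<in>Q. sum (\<lambda>_. 1::nat) {g. g \<in> ?S \<and> inv g \<otimes> p \<otimes> g = q}) = sum (\<lambda>_. 1) ?S"
      by (rule sum.group) (use fin finite_subset[OF QG fin] in auto)
    moreover have "{g. g \<in> ?S \<and> inv g \<otimes> p \<otimes> g = q} = {g\<in>carrier G. inv g \<otimes> p \<otimes> g = q}"
      if "q \<in> Q" for q using that by auto
    ultimately show ?thesis by simp
  qed
  have "(\<Sum>k\<in>carrier K. card (invariants (carrier G) \<phi> k))
      = (\<Sum>p\<in>P. \<Sum>q\<in>Q. card (invariants (carrier G) \<phi> (p,q)))"
    unfolding cK by (simp add: sum.cartesian_product)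
  also have "\<dots> = (\<Sum>p\<in>P. \<Sum>q\<in>Q. card {g\<in>carrier G. inv g \<otimes> p \<otimes> g = q})"
    using inv by simp
  also have "\<dots> = (\<Sum>p\<in>P. card {g\<in>carrier G. inv g \<otimes> p \<otimes> g \<in> Q})"
    using fib by simp
  finally show ?thesis using B orbs ordK by simp
qed

end




locale setting = group G for G (structure) +
  fixes H :: "'a set" and e :: "nat \<Rightarrow> 'a set set" and n :: nat
  assumes fin: "finite (carrier G)" and Hsub: "subgroup H G"
    and ebij: "bij_betw e {..<n} (conj_classes_of_subgroups G H)"
begin

abbreviation "S \<equiv> subgroups_of G H"
definition "rep i = class_rep (e i)"
definition "J = {i. i < n \<and> (\<exists>P\<in>e i. cyclic_subgroup G P)}"
definition "fx c P = card {p \<in> P. generate G {p} \<in> e c}"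
definition "gx c Q = card {g\<in>carrier G. cj G (inv g) (rep c) \<subseteq> Q}"
definition "cls p = (THE c. c < n \<and> generate G {p} \<in> e c)"

lemma HG: "H \<subseteq> carrier G" using Hsub subgroup.subset by blast

lemma S_sub: "W \<in> S \<Longrightarrow> subgroup W G" "W \<in> S \<Longrightarrow> W \<subseteq> H" "W \<in> S \<Longrightarrow> W \<subseteq> carrier G"
  using HG by (auto simp: subgroups_of_def)

lemma S_fin: "W \<in> S \<Longrightarrow> finite W" using S_sub(3) fin finite_subset by blast

lemma S_card_pos: "W \<in> S \<Longrightarrow> card W > 0"
  using S_fin S_sub(1) subgroup.one_closed card_gt_0_iff by blast

lemma Gc_refl: "P \<subseteq> carrier G \<Longrightarrow> G_conjugate G P P"
  using G_conjugate_iff cj_one by blast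

lemma Gc_sym: assumes "P \<subseteq> carrier G" "G_conjugate G P Q" shows "G_conjugate G Q P"
proof -
  obtain g where g: "g \<in> carrier G" "Q = cj G g P" using assms G_conjugate_iff by blast
  have "Q \<subseteq> carrier G" using g cj_subset assms by simp
  moreover have "P = cj G (inv g) Q" using g cj_inv assms by simp
  ultimately show ?thesis using G_conjugate_iff g inv_closed by blast
qed

lemma Gc_trans: assumes "P \<subseteq> carrier G" "G_conjugate G P Q" "G_conjugate G Q R"
  shows "G_conjugate G P R"
proof -
  obtain g where g: "g \<in> carrier G" "Q = cj G g P" using assms G_conjugate_iff by blast
  have "Q \<subseteq> carrier G" using g cj_subset assms by simp
  then obtain h where h: "h \<in> carrier G" "R = cj G h Q" using assms G_conjugate_iff by blast
  have "R = cj G (h \<otimes> g) P" using g h cj_cj assms by simp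
  thus ?thesis using G_conjugate_iff g h assms m_closed by blast
qed

lemma class_char: assumes i: "i < n"
  shows "e i = {Q \<in> S. G_conjugate G (rep i) Q}" "rep i \<in> e i" "rep i \<in> S"
proof -
  have "e i \<in> conj_classes_of_subgroups G H" using ebij i bij_betw_apply by fastforce
  then obtain P0 where P0: "P0 \<in> S" "e i = {Q \<in> S. G_conjugate G P0 Q}"
    unfolding conj_classes_of_subgroups_def by blast
  have "P0 \<in> e i" using P0 Gc_refl S_sub(3) by auto
  hence ri: "rep i \<in> e i" unfolding rep_def class_rep_def by (rule someI)
  thus "rep i \<in> e i" .
  thus "rep i \<in> S" using P0 by auto
  have c: "G_conjugate G P0 (rep i)" using ri P0 by auto
  show "e i = {Q \<in> S. G_conjugate G (rep i) Q}"
  proof -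
    have rG: "rep i \<subseteq> carrier G" using ri P0 S_sub(3) by auto
    have P0G: "P0 \<subseteq> carrier G" using P0 S_sub(3) by auto
    have "G_conjugate G P0 Q = G_conjugate G (rep i) Q" for Q
    proof
      assume "G_conjugate G P0 Q" thus "G_conjugate G (rep i) Q"
        using Gc_trans[OF rG Gc_sym[OF P0G c]] by blast
    next
      assume "G_conjugate G (rep i) Q" thus "G_conjugate G P0 Q"
        using Gc_trans[OF P0G c] by blast
    qed
    thus ?thesis using P0(2) by auto
  qed
qed

lemma rep_S: "i < n \<Longrightarrow> rep i \<in> S" using class_char by blast

lemma idx_unique: assumes "i < n" "j < n" "W \<in> e i" "W \<in> e j" shows "i = j"
proof -
  have WS: "W \<in> S" and ci: "G_conjugate G (rep i) W" and cjj: "G_conjugate G (rep j) W"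
    using assms class_char by blast+
  have ri: "rep i \<subseteq> carrier G" and rj: "rep j \<subseteq> carrier G"
    using assms rep_S S_sub(3) by auto
  have ij: "G_conjugate G (rep i) (rep j)" using Gc_trans[OF ri ci Gc_sym[OF rj cjj]] .
  have ji: "G_conjugate G (rep j) (rep i)" using Gc_sym[OF ri ij] .
  have "G_conjugate G (rep i) Q = G_conjugate G (rep j) Q" for Q
    using Gc_trans[OF ri ij, of Q] Gc_trans[OF rj ji, of Q] by blast
  hence "e i = e j" using class_char(1)[OF assms(1)] class_char(1)[OF assms(2)] by simp
  moreover have "inj_on e {..<n}" using ebij by (simp add: bij_betw_def)
  ultimately show ?thesis using assms(1,2) by (simp add: inj_on_def)
qed

lemma exists_idx: assumes "W \<in> S" shows "\<exists>i<n. W \<in> e i"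
proof -
  have "{Q \<in> S. G_conjugate G W Q} \<in> conj_classes_of_subgroups G H"
    unfolding conj_classes_of_subgroups_def by (rule imageI[OF assms])
  moreover have "e ` {..<n} = conj_classes_of_subgroups G H" using ebij by (simp add: bij_betw_def)
  ultimately have "{Q \<in> S. G_conjugate G W Q} \<in> e ` {..<n}" by simp
  then obtain i where "i < n" "e i = {Q \<in> S. G_conjugate G W Q}"
    by (auto simp del: subgroups_of_def)
  moreover have "W \<in> {Q \<in> S. G_conjugate G W Q}" using assms Gc_refl S_sub(3) by auto
  ultimately show ?thesis by auto
qed

lemma gen_S: "p \<in> H \<Longrightarrow> generate G {p} \<in> S"
  unfolding subgroups_of_def using HG generate_is_subgroup generate_subgroup_incl Hsub by auto

lemma cls_spec: assumes "p \<in> H"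
  shows "cls p < n" "generate G {p} \<in> e (cls p)" "cls p \<in> J"
proof -
  have ex: "\<exists>!c. c < n \<and> generate G {p} \<in> e c"
    using exists_idx[OF gen_S[OF assms]] idx_unique by blast
  show "cls p < n" "generate G {p} \<in> e (cls p)"
    using theI'[OF ex] unfolding cls_def by auto
  thus "cls p \<in> J" unfolding J_def cyclic_subgroup_def using assms HG by blast
qed

lemma cls_eq: "p \<in> H \<Longrightarrow> c < n \<Longrightarrow> generate G {p} \<in> e c \<Longrightarrow> cls p = c"
  using cls_spec idx_unique by blast

lemma count_p:
  assumes c: "c < n" and p: "p \<in> carrier G" and pc: "generate G {p} \<in> e c" and Q: "subgroup Q G"
  shows "card {g\<in>carrier G. inv g \<otimes> p \<otimes> g \<in> Q} = gx c Q"
proof -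
  let ?R = "rep c"
  have RG: "?R \<subseteq> carrier G" using rep_S c S_sub(3) by blast
  have "G_conjugate G ?R (generate G {p})" using pc class_char c by auto
  then obtain a where a: "a \<in> carrier G" "generate G {p} = cj G a ?R"
    using G_conjugate_iff RG by blast
  have eqv: "(inv g \<otimes> p \<otimes> g \<in> Q) = (cj G (inv g \<otimes> a) ?R \<subseteq> Q)" if g: "g \<in> carrier G" for g
  proof -
    have "(inv g \<otimes> p \<otimes> g \<in> Q) = (generate G {inv g \<otimes> p \<otimes> inv (inv g)} \<subseteq> Q)"
      using generate_single_le[OF Q] g p by simp
    also have "\<dots> = (cj G (inv g) (generate G {p}) \<subseteq> Q)" using cj_generate g p by simp
    also have "\<dots> = (cj G (inv g \<otimes> a) ?R \<subseteq> Q)" using a g RG cj_cj by simp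
    finally show ?thesis .
  qed
  have "card {g\<in>carrier G. inv g \<otimes> p \<otimes> g \<in> Q} = card {g\<in>carrier G. cj G (inv g \<otimes> a) ?R \<subseteq> Q}"
    using eqv by (metis (mono_tags, lifting))
  also have "\<dots> = gx c Q" unfolding gx_def
  proof (rule bij_betw_same_card[where f="\<lambda>g. inv a \<otimes> g"], rule bij_betw_byWitness[where f'="\<lambda>h. a \<otimes> h"])
    show "\<forall>x\<in>{g \<in> carrier G. cj G (inv g \<otimes> a) ?R \<subseteq> Q}. a \<otimes> (inv a \<otimes> x) = x"
      using a by (auto simp: m_assoc[symmetric])
    show "\<forall>y\<in>{g \<in> carrier G. cj G (inv g) ?R \<subseteq> Q}. inv a \<otimes> (a \<otimes> y) = y"
      using a by (auto simp: m_assoc[symmetric])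
    show "(\<otimes>) (inv a) ` {g \<in> carrier G. cj G (inv g \<otimes> a) ?R \<subseteq> Q} \<subseteq> {g \<in> carrier G. cj G (inv g) ?R \<subseteq> Q}"
      using a by (auto simp: inv_mult_group)
    show "(\<otimes>) a ` {g \<in> carrier G. cj G (inv g) ?R \<subseteq> Q} \<subseteq> {g \<in> carrier G. cj G (inv g \<otimes> a) ?R \<subseteq> Q}"
      using a by (auto simp: inv_mult_group m_assoc)
  qed
  finally show ?thesis .
qed

lemma decomp_nat: assumes i: "i < n" and j: "j < n"
  shows "card (double_cosets G (rep i) (rep j)) * (card (rep i) * card (rep j))
       = (\<Sum>c\<in>J. fx c (rep i) * gx c (rep j))"
proof -
  let ?P = "rep i" and ?Q = "rep j"
  have P: "?P \<in> S" and Q: "?Q \<in> S" using i j rep_S by auto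
  have PH: "?P \<subseteq> H" using P S_sub by auto
  have finJ: "finite J" unfolding J_def by auto
  have "card (double_cosets G ?P ?Q) * (card ?P * card ?Q)
       = (\<Sum>p\<in>?P. card {g\<in>carrier G. inv g \<otimes> p \<otimes> g \<in> ?Q})"
    using dc_count[OF fin] P Q S_sub by blast
  also have "\<dots> = (\<Sum>c\<in>J. \<Sum>p\<in>{p. p \<in> ?P \<and> cls p = c}. card {g\<in>carrier G. inv g \<otimes> p \<otimes> g \<in> ?Q})"
    by (rule sum.group[symmetric]) (use S_fin P finJ cls_spec PH in auto)
  also have "\<dots> = (\<Sum>c\<in>J. fx c ?P * gx c ?Q)"
  proof (rule sum.cong[OF refl])
    fix c assume c: "c \<in> J"
    hence cn: "c < n" by (simp add: J_def)
    have "{p. p \<in> ?P \<and> cls p = c} = {p \<in> ?P. generate G {p} \<in> e c}"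
      using cls_spec cls_eq PH cn by blast
    moreover have "card {g\<in>carrier G. inv g \<otimes> p \<otimes> g \<in> ?Q} = gx c ?Q"
      if "p \<in> ?P" "generate G {p} \<in> e c" for p
      using count_p[OF cn _ that(2)] that(1) PH HG Q S_sub by blast
    ultimately show "(\<Sum>p\<in>{p. p \<in> ?P \<and> cls p = c}. card {g\<in>carrier G. inv g \<otimes> p \<otimes> g \<in> ?Q})
        = fx c ?P * gx c ?Q"
      unfolding fx_def by simp
  qed
  finally show ?thesis .
qed

end




context setting
begin

lemma rep_G: "i < n \<Longrightarrow> rep i \<subseteq> carrier G" using rep_S S_sub(3) by blast
lemma rep_fin: "i < n \<Longrightarrow> finite (rep i)" using rep_S S_fin by blast
lemma rep_sg: "i < n \<Longrightarrow> subgroup (rep i) G" using rep_S S_sub(1) by blast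

lemma card_J: "card J = card (conj_classes_of_cyclic_subgroups G H)"
proof -
  have inj: "inj_on e J" using ebij unfolding bij_betw_def J_def by (auto intro: inj_on_subset)
  have "e ` J = conj_classes_of_cyclic_subgroups G H"
  proof
    show "e ` J \<subseteq> conj_classes_of_cyclic_subgroups G H"
      using ebij unfolding J_def conj_classes_of_cyclic_subgroups_def bij_betw_def by auto
  next
    show "conj_classes_of_cyclic_subgroups G H \<subseteq> e ` J"
    proof
      fix C assume C: "C \<in> conj_classes_of_cyclic_subgroups G H"
      hence "C \<in> e ` {..<n}" using ebij unfolding conj_classes_of_cyclic_subgroups_def bij_betw_def
        by simp
      then obtain i where i: "i < n" "C = e i" by auto
      thus "C \<in> e ` J" using C unfolding J_def conj_classes_of_cyclic_subgroups_def by auto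
    qed
  qed
  thus ?thesis using card_image[OF inj] by simp
qed

lemma G1: assumes c: "c \<in> J" shows "fx c (rep c) \<noteq> 0"
proof -
  have cn: "c < n" using c J_def by simp
  obtain Z where Z: "Z \<in> e c" "cyclic_subgroup G Z" using c J_def by auto
  then obtain z where z: "z \<in> carrier G" "Z = generate G {z}" unfolding cyclic_subgroup_def by auto
  have ZS: "Z \<in> S" and cZ: "G_conjugate G (rep c) Z" using Z(1) class_char[OF cn] by auto
  have ZG: "Z \<subseteq> carrier G" using ZS S_sub(3) by blast
  have "G_conjugate G Z (rep c)" using Gc_sym[OF rep_G[OF cn] cZ] .
  then obtain a where a: "a \<in> carrier G" "rep c = cj G a Z" using G_conjugate_iff[OF ZG] by blast
  let ?p = "a \<otimes> z \<otimes> inv a"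
  have gp: "generate G {?p} = rep c" using a z cj_generate by simp
  have "?p \<in> rep c" using gp generate.incl[of ?p "{?p}" G] by auto
  moreover have "generate G {?p} \<in> e c" using gp class_char[OF cn] by simp
  ultimately have "?p \<in> {p \<in> rep c. generate G {p} \<in> e c}" by simp
  moreover have "finite {p \<in> rep c. generate G {p} \<in> e c}" using rep_fin[OF cn] by simp
  ultimately show ?thesis unfolding fx_def by (metis card_0_eq empty_iff)
qed

lemma conj_card_rep: assumes c: "c < n" and W: "W \<in> e c" shows "card W = card (rep c)"
proof -
  have "G_conjugate G (rep c) W" using W class_char[OF c] by auto
  then obtain a where "a \<in> carrier G" "W = cj G a (rep c)" using G_conjugate_iff rep_G[OF c] by blast
  thus ?thesis using cj_card rep_G[OF c] by simp
qed

lemma G2: assumes c: "c < n" and c0: "c0 < n" and nz: "fx c (rep c0) \<noteq> 0" and ne: "c \<noteq> c0"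
  shows "card (rep c) < card (rep c0)"
proof -
  obtain p where p: "p \<in> rep c0" "generate G {p} \<in> e c"
    using nz unfolding fx_def by (metis (no_types, lifting) card.empty empty_Collect_eq)
  have pG: "p \<in> carrier G" using p rep_G[OF c0] by auto
  have sub: "generate G {p} \<subseteq> rep c0" using generate_single_le[OF rep_sg[OF c0] pG] p by simp
  have cc: "card (generate G {p}) = card (rep c)" using conj_card_rep[OF c p(2)] .
  have le: "card (rep c) \<le> card (rep c0)" using cc card_mono[OF rep_fin[OF c0] sub] by simp
  have "card (rep c) \<noteq> card (rep c0)"
  proof
    assume "card (rep c) = card (rep c0)"
    hence "generate G {p} = rep c0" using card_subset_eq[OF rep_fin[OF c0] sub] cc by simp
    hence "rep c0 \<in> e c" using p by simp
    thus False using idx_unique[OF c c0] class_char(2)[OF c0] ne by blast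
  qed
  thus ?thesis using le by simp
qed

lemma G3: assumes c: "c < n" shows "gx c (rep c) \<noteq> 0"
proof -
  have "\<one> \<in> {g\<in>carrier G. cj G (inv g) (rep c) \<subseteq> rep c}" using cj_one[OF rep_G[OF c]] by simp
  moreover have "finite {g\<in>carrier G. cj G (inv g) (rep c) \<subseteq> rep c}" using fin by simp
  ultimately show ?thesis unfolding gx_def by (metis card_0_eq empty_iff)
qed

lemma G4: assumes c: "c < n" and j: "j < n" and nz: "gx c (rep j) \<noteq> 0" and ne: "c \<noteq> j"
  shows "card (rep c) < card (rep j)"
proof -
  obtain g where g: "g \<in> carrier G" "cj G (inv g) (rep c) \<subseteq> rep j"
    using nz unfolding gx_def by (metis (no_types, lifting) card.empty empty_Collect_eq)
  have cc: "card (cj G (inv g) (rep c)) = card (rep c)" using cj_card rep_G[OF c] g by simp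
  have le: "card (rep c) \<le> card (rep j)" using cc card_mono[OF rep_fin[OF j] g(2)] by simp
  have "card (rep c) \<noteq> card (rep j)"
  proof
    assume "card (rep c) = card (rep j)"
    hence eq: "cj G (inv g) (rep c) = rep j" using card_subset_eq[OF rep_fin[OF j] g(2)] cc by simp
    have "G_conjugate G (rep c) (rep j)" using G_conjugate_iff[OF rep_G[OF c]] eq g inv_closed by blast
    hence "rep j \<in> e c" using class_char[OF c] rep_S[OF j] by simp
    thus False using idx_unique[OF c j] class_char(2)[OF j] ne by blast
  qed
  thus ?thesis using le by simp
qed

end




lemma rank_sum_le:
  fixes f g :: "'c \<Rightarrow> nat \<Rightarrow> rat"
  assumes "finite T"
  shows "vec_space.rank n (mat n n (\<lambda>(i,j). \<Sum>c\<in>T. f c i * g c j)) \<le> card T"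
  using assms
proof (induction T rule: finite_induct)
  case empty
  interpret vec_space "TYPE(rat)" n .
  have e: "mat n n (\<lambda>(i,j). \<Sum>c\<in>{}. f c i * g c j) = 0\<^sub>m n n" by (rule eq_matI) auto
  show ?case unfolding e using rank_0I by simp
next
  case (insert c T)
  interpret vec_space "TYPE(rat)" n .
  have "mat n n (\<lambda>(i,j). \<Sum>c\<in>insert c T. f c i * g c j)
      = mat n n (\<lambda>(i,j). f c i * g c j) + mat n n (\<lambda>(i,j). \<Sum>c\<in>T. f c i * g c j)"
    by (rule eq_matI) (use insert in auto)
  moreover have "rank (mat n n (\<lambda>(i,j). f c i * g c j)) \<le> 1"
    by (rule rank_le_1_product_entries[of _ n "f c" "g c"]) auto
  moreover have "rank (mat n n (\<lambda>(i,j). f c i * g c j) + mat n n (\<lambda>(i,j). \<Sum>c\<in>T. f c i * g c j))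
     \<le> rank (mat n n (\<lambda>(i,j). f c i * g c j)) + rank (mat n n (\<lambda>(i,j). \<Sum>c\<in>T. f c i * g c j))"
    by (rule rank_subadditive) auto
  ultimately show ?case using insert by simp
qed

lemma tri:
  fixes a :: "'c \<Rightarrow> 'c \<Rightarrow> rat" and u :: "'c \<Rightarrow> rat" and w :: "'c \<Rightarrow> int"
  assumes fJ: "finite J" and eqs: "\<And>c. c \<in> J \<Longrightarrow> (\<Sum>j\<in>J. a c j * u j) = 0"
    and diag: "\<And>c. c \<in> J \<Longrightarrow> a c c \<noteq> 0"
    and tr: "\<And>c j. c \<in> J \<Longrightarrow> j \<in> J \<Longrightarrow> a c j \<noteq> 0 \<Longrightarrow> c \<noteq> j \<Longrightarrow> w c < w j"
  shows "\<forall>j\<in>J. u j = 0"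
proof (rule ccontr)
  assume "\<not> (\<forall>j\<in>J. u j = 0)"
  define Z where "Z = {j\<in>J. u j \<noteq> 0}"
  have Zne: "Z \<noteq> {}" and fZ: "finite Z" using \<open>\<not> _\<close> fJ by (auto simp: Z_def)
  have "Max (w ` Z) \<in> w ` Z" using fZ Zne by (intro Max_in) auto
  then obtain j0 where j0: "j0 \<in> Z" "w j0 = Max (w ` Z)" by (auto simp del: Max_in)
  have mx: "w j \<le> w j0" if "j \<in> Z" for j using j0 fZ that by simp
  have j0J: "j0 \<in> J" and uj0: "u j0 \<noteq> 0" using j0 Z_def by auto
  have z: "a j0 j * u j = 0" if "j \<in> J - {j0}" for j
  proof (cases "u j = 0")
    case False
    hence "j \<in> Z" using that Z_def by auto
    hence "w j \<le> w j0" using mx by blast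
    moreover have "j \<in> J" "j0 \<noteq> j" using that by auto
    ultimately have "a j0 j = 0" using tr[OF j0J] by (meson not_less)
    thus ?thesis by simp
  qed simp
  have "(\<Sum>j\<in>J. a j0 j * u j) = a j0 j0 * u j0 + (\<Sum>j\<in>J - {j0}. a j0 j * u j)"
    using sum.remove[OF fJ j0J] by simp
  also have "(\<Sum>j\<in>J - {j0}. a j0 j * u j) = 0" using z by (intro sum.neutral) blast
  hence "a j0 j0 * u j0 + (\<Sum>j\<in>J - {j0}. a j0 j * u j) = a j0 j0 * u j0" by simp
  finally have "a j0 j0 * u j0 = 0" using eqs[OF j0J] by simp
  thus False using diag[OF j0J] uj0 by simp
qed




context setting
begin

definition "F c i = (of_nat (fx c (rep i)) / of_nat (card (rep i)) :: rat)"
definition "Gg c j = (of_nat (gx c (rep j)) / of_nat (card (rep j)) :: rat)"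

lemma finJ: "finite J" unfolding J_def by auto

lemma mat_eq: "double_coset_matrix G e n = mat n n (\<lambda>(i,j). \<Sum>c\<in>J. F c i * Gg c j)"
  unfolding double_coset_matrix_def
proof (rule eq_matI)
  fix i j assume ij: "i < dim_row (mat n n (\<lambda>(i,j). \<Sum>c\<in>J. F c i * Gg c j))"
    "j < dim_col (mat n n (\<lambda>(i,j). \<Sum>c\<in>J. F c i * Gg c j))"
  hence i: "i < n" and j: "j < n" by auto
  let ?d = "card (double_cosets G (rep i) (rep j))"
  let ?a = "card (rep i)" and ?b = "card (rep j)"
  have a: "?a > 0" and b: "?b > 0" using S_card_pos rep_S i j by auto
  have "of_nat (?d * (?a * ?b)) = (of_nat (\<Sum>c\<in>J. fx c (rep i) * gx c (rep j)) :: rat)"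
    using decomp_nat[OF i j] by simp
  hence "of_nat ?d * (of_nat ?a * of_nat ?b) = (\<Sum>c\<in>J. of_nat (fx c (rep i)) * of_nat (gx c (rep j)) :: rat)"
    by simp
  hence d: "(of_nat ?d :: rat) = (\<Sum>c\<in>J. of_nat (fx c (rep i)) * of_nat (gx c (rep j))) / (of_nat ?a * of_nat ?b)"
    using a b by (simp add: field_simps)
  have "(\<Sum>c\<in>J. F c i * Gg c j) = (\<Sum>c\<in>J. of_nat (fx c (rep i)) * of_nat (gx c (rep j)) / (of_nat ?a * of_nat ?b))"
    unfolding F_def Gg_def by (simp add: field_simps)
  also have "\<dots> = (\<Sum>c\<in>J. of_nat (fx c (rep i)) * of_nat (gx c (rep j))) / (of_nat ?a * of_nat ?b)"
    by (simp add: sum_divide_distrib)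
  finally show "mat n n (\<lambda>(i, j). of_nat (card (double_cosets G (class_rep (e i)) (class_rep (e j))))) $$ (i, j) =
         mat n n (\<lambda>(i,j). \<Sum>c\<in>J. F c i * Gg c j) $$ (i, j)"
    using i j d by (simp add: rep_def)
qed auto

lemma kernel:
  fixes k :: nat and v :: "nat \<Rightarrow> rat" and idx :: "nat \<Rightarrow> nat"
  assumes idx: "bij_betw idx {0..<k} J"
    and h: "\<And>i. i < n \<Longrightarrow> (\<Sum>t\<in>{0..<k}. (\<Sum>c\<in>J. F c i * Gg c (idx t)) * v t) = 0"
  shows "\<forall>t<k. v t = 0"
proof -
  define w where "w c = (\<Sum>t\<in>{0..<k}. Gg c (idx t) * v t)" for c
  have h1: "(\<Sum>c\<in>J. F c i * w c) = 0" if i: "i < n" for i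
  proof -
    have "(\<Sum>c\<in>J. F c i * w c) = (\<Sum>c\<in>J. \<Sum>t\<in>{0..<k}. F c i * Gg c (idx t) * v t)"
      unfolding w_def by (simp add: sum_distrib_left mult.assoc)
    also have "\<dots> = (\<Sum>t\<in>{0..<k}. \<Sum>c\<in>J. F c i * Gg c (idx t) * v t)" by (rule sum.swap)
    also have "\<dots> = (\<Sum>t\<in>{0..<k}. (\<Sum>c\<in>J. F c i * Gg c (idx t)) * v t)"
      by (simp add: sum_distrib_right)
    finally show ?thesis using h[OF i] by simp
  qed
  have Jn: "c \<in> J \<Longrightarrow> c < n" for c by (simp add: J_def)
  have w0: "\<forall>c\<in>J. w c = 0"
  proof (rule tri[where a="\<lambda>c0 c. F c c0" and w="\<lambda>c. - int (card (rep c))"])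
    show "finite J" by (rule finJ)
    show "(\<Sum>j\<in>J. F j c * w j) = 0" if "c \<in> J" for c using h1 Jn that by simp
    show "F c c \<noteq> 0" if "c \<in> J" for c
      using G1[OF that] S_card_pos[OF rep_S[OF Jn[OF that]]] by (simp add: F_def)
    show "- int (card (rep c)) < - int (card (rep j))" if "c \<in> J" "j \<in> J" "F j c \<noteq> 0" "c \<noteq> j" for c j
    proof -
      have "fx j (rep c) \<noteq> 0" using that(3) by (auto simp: F_def)
      thus ?thesis using G2[OF Jn[OF that(2)] Jn[OF that(1)]] that(4) by simp
    qed
  qed
  define u where "u j = v (inv_into {0..<k} idx j)" for j
  have wu: "w c = (\<Sum>j\<in>J. Gg c j * u j)" for c
  proof -
    have "(\<Sum>t\<in>{0..<k}. Gg c (idx t) * u (idx t)) = (\<Sum>j\<in>J. Gg c j * u j)"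
      by (rule sum.reindex_bij_betw[OF idx])
    moreover have "u (idx t) = v t" if "t \<in> {0..<k}" for t
      unfolding u_def using bij_betw_inv_into_left[OF idx that] by simp
    ultimately show ?thesis unfolding w_def by simp
  qed
  have u0: "\<forall>j\<in>J. u j = 0"
  proof (rule tri[where a=Gg and w="\<lambda>c. int (card (rep c))"])
    show "finite J" by (rule finJ)
    show "(\<Sum>j\<in>J. Gg c j * u j) = 0" if "c \<in> J" for c using w0 wu that by simp
    show "Gg c c \<noteq> 0" if "c \<in> J" for c
      using G3[OF Jn[OF that]] S_card_pos[OF rep_S[OF Jn[OF that]]] by (simp add: Gg_def)
    show "int (card (rep c)) < int (card (rep j))" if "c \<in> J" "j \<in> J" "Gg c j \<noteq> 0" "c \<noteq> j" for c j
    proof -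
      have "gx c (rep j) \<noteq> 0" using that(3) by (auto simp: Gg_def)
      thus ?thesis using G4[OF Jn[OF that(1)] Jn[OF that(2)]] that(4) by simp
    qed
  qed
  show ?thesis
  proof (intro allI impI)
    fix t assume "t < k"
    hence t': "t \<in> {0..<k}" by simp
    have "idx t \<in> J" "u (idx t) = v t"
      using bij_betw_apply[OF idx t'] bij_betw_inv_into_left[OF idx t'] by (auto simp: u_def)
    thus "v t = 0" using u0 by auto
  qed
qed

end




context setting
begin

lemma main: "vec_space.rank n (double_coset_matrix G e n) = card J"
proof -
  interpret V: vec_space "TYPE(rat)" n .
  define M where "M = double_coset_matrix G e n"
  have Mc: "M \<in> carrier_mat n n" unfolding M_def double_coset_matrix_def by simp
  have up: "V.rank M \<le> card J" unfolding M_def mat_eq by (rule rank_sum_le[OF finJ])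
  define k where "k = card J"
  obtain idx where idx: "bij_betw idx {0..<k} J" using ex_bij_betw_nat_finite[OF finJ] k_def by blast
  have idxn: "idx t < n" if "t < k" for t using bij_betw_apply[OF idx] that J_def by auto
  define N where "N = mat n k (\<lambda>(i,t). M $$ (i, idx t))"
  have Nc: "N \<in> carrier_mat n k" unfolding N_def by simp
  have Nent: "N $$ (i,t) = (\<Sum>c\<in>J. F c i * Gg c (idx t))" if "i < n" "t < k" for i t
    using that idxn[OF that(2)] unfolding N_def M_def mat_eq by simp
  have ker: "v = 0\<^sub>v k" if v: "v \<in> carrier_vec k" and Nv: "N *\<^sub>v v = 0\<^sub>v n" for v
  proof -
    have "\<forall>t<k. v $ t = 0"
    proof (rule kernel[OF idx])
      fix i assume i: "i < n"
      have "(N *\<^sub>v v) $ i = 0" using Nv i by simp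
      moreover have "(N *\<^sub>v v) $ i = (\<Sum>t\<in>{0..<k}. N $$ (i,t) * v $ t)"
        using i v Nc by (simp add: scalar_prod_def)
      ultimately show "(\<Sum>t\<in>{0..<k}. (\<Sum>c\<in>J. F c i * Gg c (idx t)) * v $ t) = 0"
        using Nent i by simp
    qed
    thus ?thesis using v by (intro eq_vecI) auto
  qed
  have colN: "col N t = col M (idx t)" if "t < k" for t
    using that idxn[OF that] Mc unfolding N_def by (intro eq_vecI) auto
  have dist: "distinct (cols N)"
  proof -
    have "inj_on (col N) {0..<k}"
    proof (rule inj_onI, rule ccontr)
      fix t t' assume t: "t \<in> {0..<k}" and t': "t' \<in> {0..<k}" and eq: "col N t = col N t'" and ne: "t \<noteq> t'"
      define v where "v = vec k (\<lambda>s. if s = t then 1 else if s = t' then -1 else (0::rat))"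
      have vc: "v \<in> carrier_vec k" by (simp add: v_def)
      have "N *\<^sub>v v = 0\<^sub>v n"
      proof (rule eq_vecI)
        fix i assume "i < dim_vec (0\<^sub>v n :: rat vec)"
        hence i: "i < n" by simp
        have "(N *\<^sub>v v) $ i = (\<Sum>s\<in>{0..<k}. N $$ (i,s) * v $ s)"
          using i vc Nc by (simp add: scalar_prod_def)
        also have "\<dots> = (\<Sum>s\<in>{0..<k}. (if s = t then N $$ (i,t) else 0) + (if s = t' then - N $$ (i,t') else 0))"
          by (rule sum.cong[OF refl]) (use ne in \<open>auto simp: v_def\<close>)
        also have "\<dots> = N $$ (i,t) - N $$ (i,t')"
          using t t' by (simp add: sum.distrib)
        also have "N $$ (i,t) = N $$ (i,t')"
          using arg_cong[OF eq, of "\<lambda>x. x $ i"] i t t' Nc by simp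
        finally show "(N *\<^sub>v v) $ i = 0\<^sub>v n $ i" using i by simp
      qed (use Nc in auto)
      hence "v = 0\<^sub>v k" using ker vc by blast
      moreover have "v $ t = 1" using t by (simp add: v_def)
      ultimately show False using t by simp
    qed
    thus ?thesis unfolding cols_def using Nc by (simp add: distinct_map)
  qed
  have indpt: "V.lin_indpt (set (cols N))"
  proof
    assume dep: "V.lin_dep (set (cols N))"
    obtain v where "v \<in> carrier_vec k" "v \<noteq> 0\<^sub>v k" "N *\<^sub>v v = 0\<^sub>v n"
      using V.lin_depE[OF Nc dep dist] by blast
    thus False using ker by blast
  qed
  have sub: "set (cols N) \<subseteq> set (cols M)"
  proof
    fix x assume "x \<in> set (cols N)"
    then obtain t where t: "t < k" "x = col N t" using Nc unfolding cols_def by auto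
    hence "x = col M (idx t)" using colN by simp
    thus "x \<in> set (cols M)" using idxn[OF t(1)] Mc unfolding cols_def by auto
  qed
  have "card (set (cols N)) = k" using distinct_card[OF dist] Nc by simp
  hence "k \<le> V.rank M" using V.rank_ge_card_indpt[OF Mc sub indpt] by simp
  thus ?thesis using up k_def M_def by simp
qed

end



theorem theorem1p1:
  fixes G (structure) and H :: "'a set" and e :: "nat \<Rightarrow> 'a set set" and n :: nat
  assumes "group G" and "finite (carrier G)" and "subgroup H G"
    and "bij_betw e {..<n} (conj_classes_of_subgroups G H)"
  shows "vec_space.rank n (double_coset_matrix G e n)
           = card (conj_classes_of_cyclic_subgroups G H)"
proof -
  interpret setting G H e n
    using assms by (simp add: setting_def setting_axioms_def)
  show ?thesis using main card_J by simp
qed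

end
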